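(* Let $p$ be an odd prime with $p\equiv 3\pmod 4$. Then for any odd Dirichlet characters $\chi_1,\chi_2$ modulo $p$ with $\chi_1\chi_2\neq\chi_0$, $$\sum_{a=0}^{p-1}\sum_{b=0}^{p-1}\sum_{c=0}^{p-1}\sum_{d=0}^{p-1}\overline{\chi_1}\,\overline{\chi_2}(a^4+b^4-c^4-d^4)\,\chi_1\chi_2(a^2+b^2-c^2-d^2)=0.$$
   Context: $\chi_0$ denotes the principal character modulo $p$. A character $\chi$ is odd if $\chi(-1)=-1$. Dirichlet characters modulo $p$ are extended by $\chi(x)=0$ when $p\mid x$, and $\overline{\chi}$ denotes the complex conjugate character; $\overline{\chi_1}\,\overline{\chi_2}(x)$ means $\overline{\chi_1}(x)\overline{\chi_2}(x)$. *)

theory Defs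
  imports "HOL-Number_Theory.Number_Theory" "HOL-Analysis.Analysis"
begin

definition dirichlet_char :: "nat \<Rightarrow> (int \<Rightarrow> complex) \<Rightarrow> bool" where
  "dirichlet_char m chi \<longleftrightarrow> m > 0 \<and>
     (\<forall>x y. chi (x * y) = chi x * chi y) \<and>
     (\<forall>x. chi (x + int m) = chi x) \<and>
     (\<forall>x. chi x = 0 \<longleftrightarrow> \<not> coprime x (int m))"

definition principal_char :: "nat \<Rightarrow> int \<Rightarrow> complex" where
  "principal_char m x = (if coprime x (int m) then 1 else 0)"

definition odd_char :: "(int \<Rightarrow> complex) \<Rightarrow> bool" where
  "odd_char chi \<longleftrightarrow> chi (-1) = -1"

end

theory Submission
  imports Defs
begin

lemma char_mod:
  assumes "dirichlet_char m chi" shows "chi (x mod int m) = chi x"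
proof -
  have per: "chi (y + int k * int m) = chi y" for y k
  proof (induction k arbitrary: y)
    case 0 then show ?case by simp
  next
    case (Suc k)
    have "chi (y + int (Suc k) * int m) = chi ((y + int k * int m) + int m)"
      by (simp add: algebra_simps)
    also have "\<dots> = chi (y + int k * int m)" using assms unfolding dirichlet_char_def by blast
    finally show ?case using Suc by simp
  qed
  have perz: "chi (y + k * int m) = chi y" for y k
  proof (cases "k \<ge> 0")
    case True then show ?thesis using per[of y "nat k"] by simp
  next
    case False
    have "chi y = chi ((y + k * int m) + int (nat (-k)) * int m)" using False by simp
    also have "\<dots> = chi (y + k * int m)" by (rule per)
    finally show ?thesis by simp
  qed
  have "x = x mod int m + (x div int m) * int m" by simp
  then show ?thesis using perz[of "x mod int m" "x div int m"] by metis
qed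

lemma char_cong:
  assumes "dirichlet_char m chi" "[x = y] (mod int m)" shows "chi x = chi y"
  using char_mod[OF assms(1), of x] char_mod[OF assms(1), of y] assms(2) unfolding Cong.cong_def by simp

lemma char_mult: "dirichlet_char m chi \<Longrightarrow> chi (x * y) = chi x * chi y"
  unfolding dirichlet_char_def by blast

lemma char_one: assumes "dirichlet_char m chi" shows "chi 1 = 1"
proof -
  have "chi 1 \<noteq> 0" using assms unfolding dirichlet_char_def by simp
  moreover have "chi 1 = chi 1 * chi 1" using char_mult[OF assms, of 1 1] by simp
  ultimately show ?thesis by simp
qed

lemma char_pow: "dirichlet_char m chi \<Longrightarrow> chi (x ^ n) = chi x ^ n"
  by (induction n) (simp_all add: char_one char_mult[of m chi])

lemma fermat_int:
  assumes "prime p" "coprime x (int p)" shows "[x ^ (p - 1) = 1] (mod int p)"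
proof -
  define n where "n = nat (x mod int p)"
  have p0: "p > 0" using assms prime_gt_0_nat by blast
  have n: "int n = x mod int p" unfolding n_def using p0 by simp
  have "\<not> p dvd n"
  proof
    assume "p dvd n"
    then have "int p dvd x mod int p" using n by (metis of_nat_dvd_iff)
    then have "int p dvd x" by (simp add: dvd_mod_iff)
    moreover have "coprime (int p) x" using assms(2) by (simp add: ac_simps)
    ultimately have "is_unit (int p)" using coprime_absorb_left by blast
    then show False using assms(1) by simp
  qed
  then have "[n ^ (p - 1) = 1] (mod p)" using fermat_theorem assms(1) by blast
  then have "[int n ^ (p - 1) = 1] (mod int p)" by (metis cong_int_iff of_nat_1 of_nat_power)
  moreover have "[x = int n] (mod int p)" using n by (simp add: Cong.cong_def)
  ultimately show ?thesis by (meson cong_pow cong_trans)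
qed

lemma char_norm:
  assumes "prime p" "dirichlet_char p chi" "coprime x (int p)" shows "norm (chi x) = 1"
proof -
  have "chi x ^ (p - 1) = 1"
    using char_cong[OF assms(2) fermat_int[OF assms(1,3)]] char_pow[OF assms(2)] char_one[OF assms(2)] by simp
  then have "norm (chi x) = 1 \<or> p - 1 = 0" by (rule power_eq_1_iff)
  moreover have "p - 1 > 0" using assms(1) prime_gt_1_nat by simp
  ultimately show ?thesis by simp
qed

lemma char_prod:
  assumes "dirichlet_char m chi1" "dirichlet_char m chi2"
  shows "dirichlet_char m (\<lambda>x. chi1 x * chi2 x)"
  using assms unfolding dirichlet_char_def by (auto simp: algebra_simps)

lemma char_square_trivial:
  assumes "prime p" "[p = 3] (mod 4)" "dirichlet_char p chi" "chi (-1) = 1"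
    and sq: "\<And>x. coprime x (int p) \<Longrightarrow> chi x ^ 2 = 1"
  shows "chi = principal_char p"
proof
  fix x
  show "chi x = principal_char p x"
  proof (cases "coprime x (int p)")
    case False
    then show ?thesis using assms(3) unfolding dirichlet_char_def principal_char_def by simp
  next
    case True
    define k where "k = (p - 1) div 2"
    have p3: "p mod 4 = 3" using assms(2) by (simp add: Cong.cong_def)
    have pk: "p - 1 = k + k" unfolding k_def using p3 by presburger
    have ko: "odd k" unfolding k_def using p3 by presburger
    define y where "y = x ^ k"
    have yy: "y * y = x ^ (p - 1)" unfolding y_def pk by (simp add: power_add)
    have "[y * y = 1] (mod int p)" unfolding yy by (rule fermat_int[OF assms(1) True])
    then have "int p dvd y * y - 1" by (simp add: cong_iff_dvd_diff)
    moreover have "y * y - 1 = (y - 1) * (y + 1)" by (simp add: algebra_simps)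
    ultimately have d: "int p dvd (y - 1) * (y + 1)" by simp
    have "prime (int p)" using assms(1) by simp
    then have "int p dvd (y - 1) \<or> int p dvd (y + 1)" using d prime_dvd_mult_iff by blast
    then have "chi y = 1"
    proof
      assume "int p dvd y - 1"
      then have "[y = 1] (mod int p)" by (simp add: cong_iff_dvd_diff)
      then have "chi y = chi 1" by (rule char_cong[OF assms(3)])
      then show ?thesis using char_one[OF assms(3)] by simp
    next
      assume "int p dvd y + 1"
      then have "[y = -1] (mod int p)" by (simp add: cong_iff_dvd_diff)
      then have "chi y = chi (-1)" by (rule char_cong[OF assms(3)])
      then show ?thesis using assms(4) by simp
    qed
    moreover have "chi y = chi x ^ k" unfolding y_def by (rule char_pow[OF assms(3)])
    moreover have "chi x ^ k = chi x"
    proof -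
      obtain j where "k = 2 * j + 1" using ko oddE by blast
      then have "chi x ^ k = (chi x ^ 2) ^ j * chi x" by (simp add: power_mult power_add)
      then show ?thesis using sq[OF True] by simp
    qed
    ultimately show ?thesis using True unfolding principal_char_def by simp
  qed
qed

lemma reindex_mult:
  assumes "prime p" "coprime t (int p)"
  shows "sum g {0..<int p} = (\<Sum>a\<in>{0..<int p}. g (t * a mod int p))"
proof -
  let ?h = "\<lambda>a. t * a mod int p"
  have p0: "int p > 0" using assms(1) prime_gt_0_nat by simp
  have inj: "inj_on ?h {0..<int p}"
  proof
    fix a b assume ab: "a \<in> {0..<int p}" "b \<in> {0..<int p}" "?h a = ?h b"
    then have "[t * a = t * b] (mod int p)" by (simp add: Cong.cong_def)
    then have "[a = b] (mod int p)" using assms(2)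
      by (metis cong_mult_lcancel coprime_commute)
    then show "a = b" using ab by (simp add: Cong.cong_def)
  qed
  have sub: "?h ` {0..<int p} \<subseteq> {0..<int p}" using p0 by auto
  have "?h ` {0..<int p} = {0..<int p}" by (rule endo_inj_surj[OF _ sub inj]) simp
  then have "bij_betw ?h {0..<int p} {0..<int p}" using inj by (simp add: bij_betw_def)
  then show ?thesis by (rule sum.reindex_bij_betw[symmetric])
qed

theorem lemma2p3:
  fixes p :: nat and chi1 chi2 :: "int \<Rightarrow> complex"
  assumes "prime p" and "odd p" and "[p = 3] (mod 4)"
    and "dirichlet_char p chi1" and "dirichlet_char p chi2"
    and "odd_char chi1" and "odd_char chi2"
    and "(\<lambda>x. chi1 x * chi2 x) \<noteq> principal_char p"
  shows "(\<Sum>a\<in>{0..<int p}. \<Sum>b\<in>{0..<int p}. \<Sum>c\<in>{0..<int p}. \<Sum>d\<in>{0..<int p}.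
           cnj (chi1 (a^4 + b^4 - c^4 - d^4)) * cnj (chi2 (a^4 + b^4 - c^4 - d^4))
           * (chi1 (a^2 + b^2 - c^2 - d^2) * chi2 (a^2 + b^2 - c^2 - d^2))) = 0"
proof -
  let ?chi = "\<lambda>x. chi1 x * chi2 x"
  have dc: "dirichlet_char p ?chi" by (rule char_prod[OF assms(4,5)])
  have m1: "?chi (-1) = 1" using assms(6,7) unfolding odd_char_def by simp
  obtain t where t: "coprime t (int p)" "?chi t ^ 2 \<noteq> 1"
    using char_square_trivial[OF assms(1,3) dc m1] assms(8) by blast
  define z1 where "z1 = chi1 t"
  define z2 where "z2 = chi2 t"
  have n1: "cnj z1 * z1 = 1" using char_norm[OF assms(1,4) t(1)] unfolding z1_def
    by (metis complex_norm_square mult.commute of_real_1 power_one)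
  have n2: "cnj z2 * z2 = 1" using char_norm[OF assms(1,5) t(1)] unfolding z2_def
    by (metis complex_norm_square mult.commute of_real_1 power_one)
  define w where "w = cnj (z1 * z2) ^ 2"
  have w1: "w \<noteq> 1"
  proof
    assume "w = 1"
    then have "cnj w = 1" by simp
    then have "(z1 * z2) ^ 2 = 1" unfolding w_def by simp
    then show False using t(2) unfolding z1_def z2_def by simp
  qed
  define h where "h = (\<lambda>a. t * a mod int p)"
  define F where "F = (\<lambda>a b c d :: int. cnj (chi1 (a^4 + b^4 - c^4 - d^4)) * cnj (chi2 (a^4 + b^4 - c^4 - d^4))
           * (chi1 (a^2 + b^2 - c^2 - d^2) * chi2 (a^2 + b^2 - c^2 - d^2)))"
  have hc: "[h a = t * a] (mod int p)" for a unfolding h_def Cong.cong_def by simp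
  have cg: "[(h a)^n + (h b)^n - (h c)^n - (h d)^n = t^n * (a^n + b^n - c^n - d^n)] (mod int p)" for a b c d n
  proof -
    have "[(h a)^n + (h b)^n - (h c)^n - (h d)^n = (t*a)^n + (t*b)^n - (t*c)^n - (t*d)^n] (mod int p)"
      by (intro cong_add cong_diff cong_pow hc)
    then show ?thesis by (simp add: algebra_simps power_mult_distrib)
  qed
  have ch1: "chi1 ((h a)^n + (h b)^n - (h c)^n - (h d)^n) = z1^n * chi1 (a^n + b^n - c^n - d^n)" for a b c d n
    using char_cong[OF assms(4) cg] char_mult[OF assms(4)] char_pow[OF assms(4)] unfolding z1_def by metis
  have ch2: "chi2 ((h a)^n + (h b)^n - (h c)^n - (h d)^n) = z2^n * chi2 (a^n + b^n - c^n - d^n)" for a b c d n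
    using char_cong[OF assms(5) cg] char_mult[OF assms(5)] char_pow[OF assms(5)] unfolding z2_def by metis
  have Fh: "F (h a) (h b) (h c) (h d) = w * F a b c d" for a b c d
  proof -
    have e1: "cnj z1 ^ 4 * z1 ^ 2 = cnj z1 ^ 2"
    proof -
      have "cnj z1 ^ 4 * z1 ^ 2 = cnj z1 ^ 2 * (cnj z1 * z1) ^ 2" by (simp add: algebra_simps power_mult_distrib eval_nat_numeral)
      then show ?thesis using n1 by simp
    qed
    have e2: "cnj z2 ^ 4 * z2 ^ 2 = cnj z2 ^ 2"
    proof -
      have "cnj z2 ^ 4 * z2 ^ 2 = cnj z2 ^ 2 * (cnj z2 * z2) ^ 2" by (simp add: algebra_simps power_mult_distrib eval_nat_numeral)
      then show ?thesis using n2 by simp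
    qed
    have "F (h a) (h b) (h c) (h d) = (cnj z1 ^ 4 * z1 ^ 2) * (cnj z2 ^ 4 * z2 ^ 2) * F a b c d"
      unfolding F_def ch1 ch2 by (simp add: algebra_simps)
    also have "\<dots> = w * F a b c d" unfolding e1 e2 w_def by (simp add: power_mult_distrib)
    finally show ?thesis .
  qed
  let ?I = "{0..<int p}"
  have R: "sum g ?I = (\<Sum>a\<in>?I. g (h a))" for g :: "int \<Rightarrow> complex"
    unfolding h_def by (rule reindex_mult[OF assms(1) t(1)])
  define S where "S = (\<Sum>a\<in>?I. \<Sum>b\<in>?I. \<Sum>c\<in>?I. \<Sum>d\<in>?I. F a b c d)"
  have r4: "(\<Sum>d\<in>?I. F a b c d) = (\<Sum>d\<in>?I. F a b c (h d))" for a b c by (rule R)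
  have r3: "(\<Sum>c\<in>?I. \<Sum>d\<in>?I. F a b c (h d)) = (\<Sum>c\<in>?I. \<Sum>d\<in>?I. F a b (h c) (h d))" for a b by (rule R)
  have r2: "(\<Sum>b\<in>?I. \<Sum>c\<in>?I. \<Sum>d\<in>?I. F a b (h c) (h d)) = (\<Sum>b\<in>?I. \<Sum>c\<in>?I. \<Sum>d\<in>?I. F a (h b) (h c) (h d))" for a by (rule R)
  have r1: "(\<Sum>a\<in>?I. \<Sum>b\<in>?I. \<Sum>c\<in>?I. \<Sum>d\<in>?I. F a (h b) (h c) (h d)) = (\<Sum>a\<in>?I. \<Sum>b\<in>?I. \<Sum>c\<in>?I. \<Sum>d\<in>?I. F (h a) (h b) (h c) (h d))" by (rule R)
  have "S = (\<Sum>a\<in>?I. \<Sum>b\<in>?I. \<Sum>c\<in>?I. \<Sum>d\<in>?I. F (h a) (h b) (h c) (h d))"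
  proof -
    have "S = (\<Sum>a\<in>?I. \<Sum>b\<in>?I. \<Sum>c\<in>?I. \<Sum>d\<in>?I. F a b c (h d))"
      unfolding S_def by (intro sum.cong refl r4)
    also have "\<dots> = (\<Sum>a\<in>?I. \<Sum>b\<in>?I. \<Sum>c\<in>?I. \<Sum>d\<in>?I. F a b (h c) (h d))"
      by (intro sum.cong refl r3)
    also have "\<dots> = (\<Sum>a\<in>?I. \<Sum>b\<in>?I. \<Sum>c\<in>?I. \<Sum>d\<in>?I. F a (h b) (h c) (h d))"
      by (intro sum.cong refl r2)
    also have "\<dots> = (\<Sum>a\<in>?I. \<Sum>b\<in>?I. \<Sum>c\<in>?I. \<Sum>d\<in>?I. F (h a) (h b) (h c) (h d))"
      by (rule r1)
    finally show ?thesis .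
  qed
  also have "\<dots> = w * S" unfolding S_def Fh by (simp add: sum_distrib_left)
  finally have "S = w * S" .
  then have "S = 0" using w1 by (metis mult_cancel_right1 mult.commute)
  then show ?thesis unfolding S_def F_def .
qed

end
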